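(* An ideal SALT for $n$ keys with total number of accesses $m$ can be built in $O(\min(n\log n, m))$ time, uses $O(n)$ memory, and has depth $O\!\left(\frac{\log m}{\log\log m}\right)$.
   Context: A Generic Self-Adjusting Tree (GSAT) with degree function $D$ for a set of integer keys with access counts $ac_i\ge1$ consists of $m=\sum_i ac_i$, an array of $k\le\lceil D(m)\rceil$ representative keys with their access counts, and $k+1$ child subtrees that are GSATs for the keys lying strictly before the first representative, strictly between consecutive representatives, and strictly after the last; every node stores at least one key. $m(T')$ is the total access count of keys in subtree $T'$. A GSAT is ideal if each child $T_j$ of the root satisfies $m(T_j)\le m/(D(m)+1)$ and each child is ideal. A SALT (Self-Adjusting Log Tree) is a GSAT with $D(m)=\log_2 m$ (and binary search inside nodes). Cost model for construction: given keys sorted with prefix sums of access counts, a node with subtree access count $m'$ costs $O(D(m'))$ time and memory plus $O(\log n)$ time per representative (binary search on prefix sums), besides recursive construction of its children. The depth bound is derived from the recurrence $d(m)\le 1+d\!\left(\frac{m}{\log_2 m}\right)$ for the depth $d(m)$ of an ideal SALT with $m$ total accesses. *)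

theory Defs
  imports Complex_Main
begin

text \<open>Generic Self-Adjusting Trees.  A node stores its total access count m,
  the array of its representatives (key, access count), and its children.
  Leaf is the empty subtree (for an empty key range).\<close>

datatype gsat = Leaf | Node nat "(int \<times> nat) list" "gsat list"

fun mass :: "gsat \<Rightarrow> nat" where
  "mass Leaf = 0"
| "mass (Node m _ _) = m"

text \<open>Keys (with counts) of kcs lying strictly before the first representative (j = 0),
  strictly between representatives j-1 and j, or strictly after the last (j = length reps).\<close>
definition segment :: "(int \<times> nat) list \<Rightarrow> nat \<Rightarrow> (int \<times> nat) list \<Rightarrow> (int \<times> nat) list" where
  "segment reps j kcs =
     filter (\<lambda>p. (j = 0 \<or> fst (reps ! (j - 1)) < fst p) \<and> (length reps \<le> j \<or> fst p < fst (reps ! j))) kcs"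

inductive is_gsat :: "(real \<Rightarrow> real) \<Rightarrow> (int \<times> nat) list \<Rightarrow> gsat \<Rightarrow> bool" for D where
  leaf: "is_gsat D [] Leaf"
| node: "\<lbrakk> kcs \<noteq> [];
           m = sum_list (map snd kcs);
           reps \<noteq> [];
           int (length reps) \<le> max 1 \<lceil>D (real m)\<rceil>;
           sorted_wrt (\<lambda>a b. fst a < fst b) reps;
           set reps \<subseteq> set kcs;
           length ts = length reps + 1;
           \<forall>j < length ts. is_gsat D (segment reps j kcs) (ts ! j) \<rbrakk>
         \<Longrightarrow> is_gsat D kcs (Node m reps ts)"

fun ideal :: "(real \<Rightarrow> real) \<Rightarrow> gsat \<Rightarrow> bool" where
  "ideal D Leaf = True"
| "ideal D (Node m reps ts) =
     (\<forall>t \<in> set ts. real (mass t) \<le> real m / (D (real m) + 1) \<and> ideal D t)"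

definition D_salt :: "real \<Rightarrow> real" where
  "D_salt x = log 2 x"

definition is_salt :: "(int \<times> nat) list \<Rightarrow> gsat \<Rightarrow> bool" where
  "is_salt kcs T = is_gsat D_salt kcs T"

definition ideal_salt :: "gsat \<Rightarrow> bool" where
  "ideal_salt T = ideal D_salt T"

fun depth :: "gsat \<Rightarrow> nat" where
  "depth Leaf = 0"
| "depth (Node m reps ts) = 1 + Max (set (0 # map depth ts))"

fun nkeys :: "gsat \<Rightarrow> nat" where
  "nkeys Leaf = 0"
| "nkeys (Node m reps ts) = length reps + sum_list (map nkeys ts)"

text \<open>Cost model for construction: a node with k representatives costs 1 + k
  (allocating its arrays of k representatives and k+1 child pointers) plus one binary
  search over the prefix sums of its key range per representative, costing
  1 + log2 (number of keys in the subtree), plus the cost of its children.\<close>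
fun build_time :: "gsat \<Rightarrow> real" where
  "build_time Leaf = 0"
| "build_time (Node m reps ts) =
     real (1 + length reps)
     + real (length reps) * (1 + log 2 (real (nkeys (Node m reps ts))))
     + sum_list (map build_time ts)"

fun build_memory :: "gsat \<Rightarrow> real" where
  "build_memory Leaf = 0"
| "build_memory (Node m reps ts) = real (1 + length reps) + sum_list (map build_memory ts)"

end

theory Submission
  imports Defs "HOL-Library.Discrete_Functions"
begin


definition jj :: "nat \<Rightarrow> nat" where "jj l = floor_log (l+1)"
definition G :: "nat \<Rightarrow> nat" where "G j = (\<Sum>i\<in>{1..<j}. 2^(i+1) div i + 1)"
definition N :: "nat \<Rightarrow> nat" where "N l = (if l = 0 then 0 else G (jj l) + (l+1) div jj l)"
definition Dl :: "nat \<Rightarrow> nat" where "Dl m = (if m = 0 then 0 else 1 + N (floor_log m))"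

lemma G_mono: "a \<le> b \<Longrightarrow> G a \<le> G b"
  unfolding G_def by (rule sum_mono2) auto

lemma G_Suc: "1 \<le> j \<Longrightarrow> G (Suc j) = G j + (2^(j+1) div j + 1)"
  unfolding G_def by (simp add: atLeastLessThanSuc)

lemma jj_pos: "1 \<le> l \<Longrightarrow> 1 \<le> jj l"
proof -
  assume "1 \<le> l"
  then have "floor_log 2 \<le> floor_log (l+1)" by (intro floor_log_le_iff) simp
  then show ?thesis using floor_log_power[of 1] by (simp add: jj_def)
qed

lemma jj_mono: "a \<le> b \<Longrightarrow> jj a \<le> jj b"
  unfolding jj_def by (intro floor_log_le_iff) simp

lemma jj_le: "2 ^ jj l \<le> l + 1"
  unfolding jj_def by (rule floor_log_exp2_le) simp

lemma jj_gt: "l + 1 < 2 ^ (jj l + 1)"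
  unfolding jj_def using floor_log_exp2_gt[of "l+1"] by simp

lemma N_step:
  assumes l: "1 \<le> l" and l': "l' + jj l \<le> l"
  shows "N l' + 1 \<le> N l"
proof -
  have j1: "1 \<le> jj l" using jj_pos[OF l] .
  have jl: "jj l \<le> l + 1" using jj_le[of l] using less_exp[of "jj l"] by linarith 
  show ?thesis
  proof (cases "l' = 0")
    case True
    have "1 \<le> (l+1) div jj l" using jl j1 by (simp add: Suc_le_eq div_greater_zero_iff)
    then show ?thesis using True l by (simp add: N_def)
  next
    case False
    then have l'1: "1 \<le> l'" by simp
    have jle: "jj l' \<le> jj l" using l' by (intro jj_mono) simp
    show ?thesis
    proof (cases "jj l' = jj l")
      case True
      have "(l'+1) div jj l + 1 = (l' + 1 + jj l) div jj l" using div_add_self2[of "jj l" "l'+1"] j1 by simp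
      also have "\<dots> \<le> (l+1) div jj l" using l' by (intro div_le_mono) simp
      finally show ?thesis using True l l'1 by (simp add: N_def)
    next
      case False
      then have lt: "jj l' + 1 \<le> jj l" using jle by simp
      have j1': "1 \<le> jj l'" using jj_pos[OF l'1] .
      have "(l'+1) div jj l' \<le> 2^(jj l' + 1) div jj l'"
        using jj_gt[of l'] by (intro div_le_mono) simp
      then have "N l' + 1 \<le> G (Suc (jj l'))" using l'1 j1' by (simp add: N_def G_Suc)
      also have "\<dots> \<le> G (jj l)" using lt by (intro G_mono) simp
      finally show ?thesis using l by (simp add: N_def)
    qed
  qed
qed

lemma aux_nat1: "2 \<le> (j::nat) \<Longrightarrow> j * (j+1) \<le> (6*j - 10) * 2^j"
proof -
  assume j: "2 \<le> j"
  have a: "j \<le> 6*j - 10" using j by simp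
  have b: "j + 1 \<le> 2^j" using less_exp[of j] by (simp add: Suc_le_eq)
  show ?thesis using mult_le_mono[OF a b] .
qed

lemma G_bound: "1 \<le> j \<Longrightarrow> real (G j) \<le> 8 * 2^j / j"
proof (induction j rule: dec_induct)
  case base
  then show ?case by (simp add: G_def)
next
  case (step j)
  show ?case
  proof (cases "j = 1")
    case True
    then show ?thesis by (simp add: G_def)
  next
    case False
    then have j2: "2 \<le> j" using step(1) by simp
    have "real (G (Suc j)) = real (G j) + real (2^(j+1) div j) + 1"
      using step(1) by (simp add: G_Suc)
    also have "\<dots> \<le> 8 * 2^j / j + 2^(j+1) / j + 1"
      using step(3) of_nat_div_le_of_nat[of "2^(j+1)" j, where 'a=real] by simp
    also have "\<dots> \<le> 8 * 2^(Suc j) / (Suc j)"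
    proof -
      have h: "real j * (real j + 1) \<le> (6 * real j - 10) * 2^j"
      proof -
        have "real (j*(j+1)) \<le> real ((6*j-10)*2^j)" using aux_nat1[OF j2] by (simp only: of_nat_le_iff)
        moreover have "real (6*j-10) = 6*real j - 10" using j2 by (simp add: of_nat_diff)
        ultimately show ?thesis by (simp add: distrib_left)
      qed
      have jp: "real j > 0" using j2 by simp
      have "(8 * 2^j / j + 2^(j+1) / j + 1) * (real j * (real j + 1)) = (10 * 2^j + j) * (j+1)"
        using jp by (simp add: field_simps)
      also have "\<dots> \<le> 16 * 2^j * j" using h by (simp add: algebra_simps)
      also have "\<dots> = (8 * 2^(Suc j) / (Suc j)) * (real j * (real j + 1))"
        using jp by (simp add: field_simps)
      finally show ?thesis by (rule mult_right_le_imp_le) (use jp in auto)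
    qed
    finally show ?thesis .
  qed
qed

lemma Dl_bound:
  assumes m: "4 \<le> m"
  shows "real (Dl m) \<le> 40 * log 2 (real m) / log 2 (log 2 (real m))"
proof -
  define l where "l = floor_log m"
  define j where "j = jj l"
  define L where "L = log 2 (real m)"
  have l2: "2 \<le> l" unfolding l_def using floor_log_le_iff[OF m] floor_log_power[of 2] by simp
  have j1: "1 \<le> j" using jj_pos l2 unfolding j_def by simp
  have pj: "2^j \<le> l + 1" using jj_le unfolding j_def .
  have jl: "j + 1 < 2^(j+1)" using less_exp[of "j+1"] .
  have pj': "l + 1 < 2^(j+1)" using jj_gt unfolding j_def .
  have ml: "2^l \<le> m" unfolding l_def by (rule floor_log_exp2_le) (use m in simp)
  have mu: "m < 2^(l+1)" unfolding l_def using floor_log_exp2_gt[of m] by simp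
  have lL: "real l \<le> L" unfolding L_def using le_log2_of_power[OF ml] by simp
  have Lu: "L < real l + 1" unfolding L_def using log2_of_power_less[OF mu] m by simp
  have L2: "2 \<le> L" using lL l2 by simp
  have logL: "log 2 L < real j + 1"
  proof -
    have "L < 2 ^ (j+1)" using Lu pj' by (metis add.commute less_trans of_nat_1 of_nat_add of_nat_less_iff of_nat_numeral of_nat_power)
    then have "log 2 L < log 2 (2 ^ (j+1))" using L2 by (subst log_less_cancel_iff) auto
    also have "log 2 (2 ^ (j+1)) = real (j+1)" by (rule log_pow_cancel) auto
    finally show ?thesis by simp
  qed
  have logL1: "1 \<le> log 2 L" using L2 by simp
  have Dl_eq: "Dl m = 1 + G j + (l+1) div j" using m l2 unfolding Dl_def N_def l_def j_def by simp
  have "real (Dl m) \<le> 1 + 8 * 2^j / j + (l+1)/j"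
    using G_bound[OF j1] of_nat_div_le_of_nat[of "l+1" j, where 'a=real] unfolding Dl_eq by simp
  also have "\<dots> \<le> 10 * (real l + 1) / real j"
  proof -
    have "real j \<le> real l + 1" using pj less_exp[of j] by linarith
    then have "1 \<le> (real l + 1) / j" using j1 by simp
    moreover have "8 * 2^j / j \<le> 8 * (real l+1) / j"
    proof -
      have "real (2^j) \<le> real (l+1)" using pj by (simp only: of_nat_le_iff)
      then have "(2::real)^j \<le> real l + 1" by simp
      then show ?thesis by (intro divide_right_mono) auto
    qed
    ultimately show ?thesis by (simp add: add_divide_distrib)
  qed
  also have "\<dots> \<le> 10 * (2 * L) / (log 2 L / 2)"
  proof (rule frac_le)
    show "0 \<le> 10 * (2 * L)" using L2 by simp
    show "10 * (real l + 1) \<le> 10 * (2 * L)" using lL L2 by simp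
    show "0 < log 2 L / 2" using logL1 by simp
    show "log 2 L / 2 \<le> real j" using logL j1 by simp
  qed
  also have "\<dots> = 40 * L / log 2 L" by simp
  finally show ?thesis unfolding L_def .
qed



lemma depth_step:
  assumes mj1: "1 \<le> mj" and lt: "mj < m" and le: "real mj \<le> real m / (log 2 (real m) + 1)"
  shows "Dl mj + 1 \<le> Dl m"
proof -
  define l where "l = floor_log m"
  define lj where "lj = floor_log mj"
  have m2: "2 \<le> m" using mj1 lt by simp
  have l1: "1 \<le> l" unfolding l_def using floor_log_le_iff[OF m2] floor_log_power[of 1] by simp
  have ml: "2^l \<le> m" unfolding l_def by (rule floor_log_exp2_le) (use m2 in simp)
  have mu: "m < 2^(l+1)" unfolding l_def using floor_log_exp2_gt[of m] by simp
  have mjl: "2^lj \<le> mj" unfolding lj_def by (rule floor_log_exp2_le) (use mj1 in simp)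
  have lL: "real l \<le> log 2 (real m)" using le_log2_of_power[OF ml] by simp
  have L0: "0 \<le> log 2 (real m)" using lL by simp
  have pj: "real (2 ^ jj l) \<le> real l + 1" using jj_le[of l] by (simp only: of_nat_le_iff)
  have "real (2^(lj + jj l)) = real (2^lj) * real (2^jj l)" by (simp add: power_add)
  also have "\<dots> \<le> real mj * (log 2 (real m) + 1)"
    using mjl pj lL by (intro mult_mono) (simp_all add: of_nat_le_iff[symmetric])
  also have "\<dots> \<le> real m" using le L0 by (simp add: field_simps)
  also have "\<dots> < real (2^(l+1))" using mu by (simp only: of_nat_less_iff)
  finally have "2^(lj + jj l) < (2::nat)^(l+1)" by (simp only: of_nat_less_iff)
  then have "lj + jj l < l + 1" using power_strict_increasing_iff[of "2::nat" "lj + jj l" "l+1"] by linarith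
  then have "N lj + 1 \<le> N l" using N_step[OF l1] by simp
  then show ?thesis using mj1 lt unfolding Dl_def l_def lj_def by simp
qed

definition Phi :: "nat \<Rightarrow> real" where "Phi m = 1000 * real m - 2 * sqrt (real m)"
definition phi :: "nat \<Rightarrow> real" where "phi m = (1 + log 2 (real m)) * log 2 (real m)"

lemma aux_nat2: "8 \<le> s \<Longrightarrow> (2*s+3)*(2*s+2) \<le> 2 * 2^s"
proof (induction s rule: dec_induct)
  case base then show ?case by simp
next
  case (step s)
  have "(2*Suc s+3)*(2*Suc s+2) \<le> 2 * ((2*s+3)*(2*s+2))" using step(1) by (simp add: algebra_simps)
  also have "\<dots> \<le> 2 * (2 * 2^s)" using step(3) by simp
  finally show ?case by simp
qed

lemma phi_big:
  assumes "16 \<le> floor_log m"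
  shows "phi m \<le> 2 * sqrt (real m)"
proof -
  define l where "l = floor_log m"
  define s where "s = l div 2"
  have m1: "m > 0" using assms by (cases m) auto
  have s8: "8 \<le> s" using assms unfolding s_def l_def by simp
  have ls: "l \<le> 2*s+1" unfolding s_def by simp
  have ml: "2^l \<le> m" unfolding l_def by (rule floor_log_exp2_le) (use m1 in simp)
  have mu: "m < 2^(l+1)" unfolding l_def using floor_log_exp2_gt[of m] by simp
  have lL: "real l \<le> log 2 (real m)" using le_log2_of_power[OF ml] by simp
  have Lu: "log 2 (real m) < real l + 1" using log2_of_power_less[OF mu] m1 by simp
  have L0: "0 \<le> log 2 (real m)" using lL by simp
  have "phi m \<le> (2*real s+3)*(2*real s+2)"
    unfolding phi_def using Lu ls L0
    by (intro mult_mono) (simp_all add: of_nat_le_iff[symmetric])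
  also have "\<dots> = real ((2*s+3)*(2*s+2))" by (simp add: algebra_simps)
  also have "\<dots> \<le> real (2 * 2^s)" using aux_nat2[OF s8] by (simp only: of_nat_le_iff)
  also have "\<dots> = 2 * sqrt (real (2^(2*s)))"
    by (simp add: power_mult real_sqrt_power)
  also have "\<dots> \<le> 2 * sqrt (real m)"
  proof -
    have "(2::nat)^(2*s) \<le> 2^l" using ls unfolding s_def by (intro power_increasing) auto
    then have "real (2^(2*s)) \<le> real m" using ml by (simp only: of_nat_le_iff)
    then show ?thesis by simp
  qed
  finally show ?thesis .
qed

lemma phi_small:
  assumes "floor_log m < 16" "0 < m"
  shows "phi m \<le> 272" "sqrt (real m) < 256"
proof -
  define l where "l = floor_log m"
  have mu: "m < 2^(l+1)" unfolding l_def using floor_log_exp2_gt[of m] by simp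
  have mu': "m < 2^16"
  proof -
    have "(2::nat)^(l+1) \<le> 2^16" using assms(1) unfolding l_def by (intro power_increasing) auto
    then show ?thesis using mu by simp
  qed
  have Lu: "log 2 (real m) < 16" using log2_of_power_less[OF mu' assms(2)] by simp
  have L0: "0 \<le> log 2 (real m)" using assms(2) by simp
  show "phi m \<le> 272" unfolding phi_def
  proof -
    have "(1 + log 2 (real m)) * log 2 (real m) \<le> 17 * 16"
      using Lu L0 by (intro mult_mono) auto
    then show "(1 + log 2 (real m)) * log 2 (real m) \<le> 272" by simp
  qed
  have "real m < 256^2" using mu' by simp
  then have "sqrt (real m) < sqrt (256^2)" by (simp only: real_sqrt_less_iff)
  then show "sqrt (real m) < 256" by simp
qed

lemma sqrt_elem:
  assumes "real x * c \<le> real m" "0 \<le> c" "0 < m"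
  shows "real x * sqrt c / sqrt (real m) \<le> sqrt (real x)"
proof -
  have "real x * sqrt c = sqrt (real x) * sqrt (real x * c)"
    by (simp add: real_sqrt_mult)
  also have "\<dots> \<le> sqrt (real x) * sqrt (real m)"
    using assms by (intro mult_left_mono) auto
  finally show ?thesis using assms(3) by (simp add: divide_le_eq)
qed

lemma sum_list_Phi: "sum_list (map Phi ms) = 1000 * real (sum_list ms) - 2 * sum_list (map (\<lambda>x. sqrt (real x)) ms)"
  by (induction ms) (auto simp: Phi_def algebra_simps)

lemma sum_list_lin: "sum_list (map (\<lambda>x. real x * c) ms) = real (sum_list ms) * c"
  by (induction ms) (auto simp: algebra_simps)

lemma sqrt_le_self': "1 \<le> x \<Longrightarrow> sqrt x \<le> (x::real)"
proof -
  assume x: "1 \<le> x"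
  then have "1 \<le> sqrt x" by simp
  then have "sqrt x * 1 \<le> sqrt x * sqrt x" by (intro mult_left_mono) auto
  then show ?thesis using x by simp
qed

lemma pot_step:
  assumes m1: "1 \<le> m" and small: "\<forall>x\<in>set ms. real x \<le> real m / (log 2 (real m) + 1)"
    and sm: "sum_list ms + 1 \<le> m"
  shows "phi m + sum_list (map Phi ms) \<le> Phi m"
proof -
  define L where "L = log 2 (real m)"
  define S where "S = real (sum_list ms)"
  define Q where "Q = sum_list (map (\<lambda>x. sqrt (real x)) ms)"
  define sm where "sm = sqrt (real m)"
  have L0: "0 \<le> L" unfolding L_def using m1 by simp
  have smp: "0 < sm" unfolding sm_def using m1 by simp
  have msm: "real m = sm * sm" unfolding sm_def by simp
  have sml: "sm \<le> real m" unfolding sm_def using m1 by (intro sqrt_le_self') simp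
  have Q0: "0 \<le> Q" unfolding Q_def by (induction ms) auto
  have QS: "S * sqrt (L+1) / sm \<le> Q"
  proof -
    have "sum_list (map (\<lambda>x. real x * (sqrt (L+1) / sm)) ms) \<le> Q"
      unfolding Q_def
    proof (rule sum_list_mono)
      fix x assume "x \<in> set ms"
      then have "real x \<le> real m / (L + 1)" using small L_def by simp
      then have "real x * (L+1) \<le> real m" using L0 by (simp add: field_simps)
      from sqrt_elem[OF this] L0 m1 show "real x * (sqrt (L + 1) / sm) \<le> sqrt (real x)"
        unfolding sm_def by simp
    qed
    then show ?thesis unfolding sum_list_lin S_def by simp
  qed
  have phi_lin: "phi m \<le> 272 * real m"
  proof (cases "16 \<le> floor_log m")
    case True then show ?thesis using phi_big[OF True] sml unfolding sm_def by simp
  next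
    case False then show ?thesis using phi_small[of m] m1 by simp
  qed
  have LHS: "phi m + sum_list (map Phi ms) = phi m + 1000 * S - 2 * Q"
    unfolding sum_list_Phi S_def Q_def by simp
  have Sm: "S + 1 \<le> real m" unfolding S_def proof -
    have "real (sum_list ms + 1) \<le> real m" using sm by (simp only: of_nat_le_iff)
    then show "real (sum_list ms) + 1 \<le> real m" by simp
  qed
  show ?thesis
  proof (cases "S \<le> real m / 2")
    case True
    then show ?thesis unfolding LHS Phi_def sm_def[symmetric] using phi_lin sml Q0 by linarith
  next
    case False
    show ?thesis
    proof (cases "16 \<le> floor_log m")
      case True
      have "(2::nat)^16 \<le> 2^floor_log m" using True by (intro power_increasing) auto
      also have "\<dots> \<le> m" by (rule floor_log_exp2_le) (use m1 in simp)
      finally have "(16::real) \<le> L" unfolding L_def using le_log2_of_power[of 16 m] by simp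
      then have "sqrt (4^2) \<le> sqrt (L+1)" by (simp only: real_sqrt_le_iff) simp
      then have s4: "4 \<le> sqrt (L+1)" by simp
      have "2 * sm = (real m / 2) * 4 / sm" using smp msm by (simp add: field_simps)
      also have "\<dots> \<le> S * sqrt (L+1) / sm"
        using False s4 smp by (intro divide_right_mono mult_mono) auto
      also have "\<dots> \<le> Q" by (rule QS)
      finally have "2 * sm \<le> Q" .
      then show ?thesis unfolding LHS Phi_def sm_def[symmetric] using phi_big[OF True] Sm
        unfolding sm_def by linarith
    next
      case False
      then have "phi m \<le> 272" "sm < 256" using phi_small[of m] m1 unfolding sm_def by auto
      then show ?thesis unfolding LHS Phi_def sm_def[symmetric] using Sm Q0 by linarith
    qed
  qed
qed



definition flat :: "((int \<times> nat) list \<times> (int \<times> nat)) list \<Rightarrow> (int \<times> nat) list" where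
  "flat ps = concat (map (\<lambda>(b,r). b @ [r]) ps)"

lemma flat_Nil[simp]: "flat [] = []" by (simp add: flat_def)
lemma flat_Cons[simp]: "flat ((b,r)#ps) = b @ r # flat ps" by (simp add: flat_def)

lemma reps_in_flat: "set (map snd ps) \<subseteq> set (flat ps)"
  by (induction ps) auto

lemma segment_flat:
  assumes "sorted_wrt (\<lambda>a b. fst a < fst b) (flat ps @ l)" "j \<le> length ps"
  shows "segment (map snd ps) j (flat ps @ l) = (map fst ps @ [l]) ! j"
  using assms
proof (induction ps arbitrary: j)
  case Nil
  then show ?case by (simp add: segment_def)
next
  case (Cons pr ps)
  obtain b r where pr: "pr = (b,r)" by (cases pr)
  define rest where "rest = flat ps @ l"
  have S: "sorted_wrt (\<lambda>a b. fst a < fst b) (b @ r # rest)"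
    using Cons.prems(1) by (simp add: pr rest_def)
  have bl: "\<forall>p\<in>set b. fst p < fst r" using S by (simp add: sorted_wrt_append)
  have rr: "\<forall>p\<in>set rest. fst r < fst p" using S by (simp add: sorted_wrt_append)
  have srest: "sorted_wrt (\<lambda>a b. fst a < fst b) rest" using S by (simp add: sorted_wrt_append)
  have repsin: "set (map snd ps) \<subseteq> set rest" using reps_in_flat[of ps] by (auto simp: rest_def)
  show ?case
  proof (cases j)
    case 0
    have "segment (map snd (pr # ps)) j (flat (pr # ps) @ l)
        = filter (\<lambda>p. fst p < fst r) (b @ r # rest)"
      by (simp add: segment_def 0 pr rest_def)
    also have "\<dots> = b" using bl rr by (auto simp: filter_empty_conv intro!: filter_True)
    finally show ?thesis by (simp add: 0 pr)
  next
    case (Suc j')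
    have j': "j' \<le> length ps" using Cons.prems(2) Suc by simp
    have IH: "segment (map snd ps) j' rest = (map fst ps @ [l]) ! j'"
      using Cons.IH[OF _ j'] srest by (simp add: rest_def)
    define P where "P = (\<lambda>p::int\<times>nat. (fst ((r # map snd ps) ! j') < fst p) \<and>
        (length (map snd ps) \<le> j' \<or> fst p < fst (map snd ps ! j')))"
    have "segment (map snd (pr # ps)) j (flat (pr # ps) @ l) = filter P (b @ r # rest)"
      by (simp add: segment_def Suc pr rest_def P_def)
    also have "\<dots> = filter P rest"
    proof -
      have kr: "fst r \<le> fst ((r # map snd ps) ! j')"
      proof (cases j')
        case 0 then show ?thesis by simp
      next
        case (Suc i)
        then have "i < length ps" using j' by simp
        then have "map snd ps ! i \<in> set rest" using repsin by (auto)
        then show ?thesis using rr Suc by fastforce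
      qed
      have "filter P b = []" using bl kr by (auto simp: filter_empty_conv P_def)
      moreover have "\<not> P r" using kr by (simp add: P_def)
      ultimately show ?thesis by simp
    qed
    also have "\<dots> = segment (map snd ps) j' rest"
      unfolding segment_def P_def
    proof (rule filter_cong[OF refl])
      fix p assume "p \<in> set rest"
      then show "(fst ((r # map snd ps) ! j') < fst p \<and> (length (map snd ps) \<le> j' \<or> fst p < fst (map snd ps ! j'))) =
         ((j' = 0 \<or> fst (map snd ps ! (j' - 1)) < fst p) \<and> (length (map snd ps) \<le> j' \<or> fst p < fst (map snd ps ! j')))"
        using rr by (cases j') auto
    qed
    finally show ?thesis using IH by (simp add: Suc)
  qed
qed



definition cnt :: "(int \<times> nat) list \<Rightarrow> nat" where "cnt xs = sum_list (map snd xs)"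

lemma cnt_simps[simp]: "cnt [] = 0" "cnt (x#xs) = snd x + cnt xs" "cnt (xs @ ys) = cnt xs + cnt ys"
  by (simp_all add: cnt_def)

fun gr :: "real \<Rightarrow> (int \<times> nat) list \<Rightarrow> (int \<times> nat) list \<Rightarrow> ((int \<times> nat) list \<times> (int \<times> nat)) list \<times> (int \<times> nat) list" where
  "gr M cur [] = ([], cur)"
| "gr M cur (x#xs) = (if M < real (cnt cur + snd x) then (case gr M [] xs of (ps,l) \<Rightarrow> ((cur,x)#ps, l)) else gr M (cur@[x]) xs)"

lemma gr_props:
  "real (cnt cur) \<le> M \<Longrightarrow> 0 \<le> M \<Longrightarrow> gr M cur xs = (ps,l) \<Longrightarrow>
   cur @ xs = flat ps @ l \<and> (\<forall>(b,r)\<in>set ps. real (cnt b) \<le> M \<and> M < real (cnt b + snd r)) \<and> real (cnt l) \<le> M"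
proof (induction M cur xs arbitrary: ps l rule: gr.induct)
  case (1 M cur)
  then show ?case by auto
next
  case (2 M cur x xs)
  show ?case
  proof (cases "M < real (cnt cur + snd x)")
    case True
    obtain ps' l' where g: "gr M [] xs = (ps', l')" by (cases "gr M [] xs")
    have ps: "ps = (cur,x)#ps'" "l = l'" using 2(5) True g by auto
    have IH: "xs = flat ps' @ l' \<and> (\<forall>(b,r)\<in>set ps'. real (cnt b) \<le> M \<and> M < real (cnt b + snd r)) \<and> real (cnt l') \<le> M"
      using 2(1)[OF True, of ps' l'] 2(4) g by simp
    show ?thesis using IH ps True 2(3) by auto
  next
    case False
    have "real (cnt (cur @ [x])) \<le> M" using False by simp
    from 2(2)[OF False this 2(4)] 2(5) False show ?thesis by simp
  qed
qed

lemma len_sum: "(\<forall>x\<in>set ps. M < f x) \<Longrightarrow> ps \<noteq> [] \<Longrightarrow> real (length ps) * M < sum_list (map f ps)"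
proof (induction ps)
  case Nil then show ?case by simp
next
  case (Cons a ps)
  then show ?case by (cases "ps = []") (auto simp: algebra_simps)
qed

lemma cnt_flat: "cnt (flat ps) = sum_list (map (\<lambda>(b,r). cnt b + snd r) ps)"
  by (induction ps) auto

lemma decomp:
  assumes "kcs \<noteq> []" "0 \<le> M"
  shows "\<exists>ps l. kcs = flat ps @ l \<and> ps \<noteq> [] \<and> (\<forall>b\<in>fst ` set ps. real (cnt b) \<le> M) \<and> real (cnt l) \<le> M
     \<and> (length ps = 1 \<or> real (length ps) * M < real (cnt kcs))"
proof -
  obtain ps l where g: "gr M [] kcs = (ps, l)" by (cases "gr M [] kcs")
  have c0: "real (cnt []) \<le> M" using assms(2) by simp
  from gr_props[OF c0 assms(2) g] have P: "kcs = flat ps @ l"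
    "\<forall>(b,r)\<in>set ps. real (cnt b) \<le> M \<and> M < real (cnt b + snd r)" "real (cnt l) \<le> M" by auto
  show ?thesis
  proof (cases "ps = []")
    case True
    have kl: "kcs = l" using P True by simp
    have "kcs = flat [(butlast kcs, last kcs)] @ []" using assms(1) by simp
    moreover have "real (cnt (butlast kcs)) \<le> M"
    proof -
      have "cnt (butlast kcs) \<le> cnt kcs" using append_butlast_last_id[OF assms(1)]
        by (metis cnt_simps(3) le_add1)
      then show ?thesis using P(3) kl by (metis of_nat_le_iff order_trans)
    qed
    ultimately show ?thesis by (intro exI[of _ "[(butlast kcs, last kcs)]"] exI[of _ "[]"]) auto
  next
    case False
    have "real (length ps) * M < sum_list (map (\<lambda>x. real ((\<lambda>(b,r). cnt b + snd r) x)) ps)"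
      using P(2) False by (intro len_sum) auto
    also have "\<dots> = real (cnt (flat ps))" by (induction ps) auto
    also have "\<dots> \<le> real (cnt kcs)" using P(1) by simp
    finally show ?thesis using P False by (intro exI[of _ ps] exI[of _ l]) auto
  qed
qed

lemma flat_len: "length (flat ps) = length ps + sum_list (map (length \<circ> fst) ps)"
  by (induction ps) auto

lemma part_len: "length (flat ps @ l) = length ps + sum_list (map length (map fst ps @ [l]))"
  by (simp add: flat_len)

lemma part_cnt: "cnt (flat ps @ l) = cnt (map snd ps) + sum_list (map cnt (map fst ps @ [l]))"
  by (induction ps) auto

lemma seg_props:
  assumes "sorted_wrt R (flat ps @ l)"
  shows "\<forall>s\<in>set (map fst ps @ [l]). sorted_wrt R s \<and> set s \<subseteq> set (flat ps @ l)"
    "sorted_wrt R (map snd ps)"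
  using assms
proof (induction ps)
  case Nil
  { case 1 then show ?case by simp }
  { case 2 then show ?case by simp }
next
  case (Cons a ps)
  obtain b r where a: "a = (b,r)" by (cases a)
  { case 1
    then have S: "sorted_wrt R (b @ r # (flat ps @ l))" by (simp add: a)
    then have "sorted_wrt R (flat ps @ l)" by (simp add: sorted_wrt_append)
    with Cons.IH(1) have "\<forall>s\<in>set (map fst ps @ [l]). sorted_wrt R s \<and> set s \<subseteq> set (flat ps @ l)" .
    moreover have "sorted_wrt R b" using S by (simp add: sorted_wrt_append)
    ultimately show ?case by (auto simp: a) }
  { case 2
    then have S: "sorted_wrt R (b @ r # (flat ps @ l))" by (simp add: a)
    then have "sorted_wrt R (flat ps @ l)" by (simp add: sorted_wrt_append)
    with Cons.IH(2) have "sorted_wrt R (map snd ps)" .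
    moreover have "\<forall>x\<in>set (map snd ps). R r x" using S reps_in_flat[of ps] by (auto simp: sorted_wrt_append)
    ultimately show ?case by (simp add: a) }
qed

lemma seg_shorter:
  assumes "ps \<noteq> []"
  shows "\<forall>s\<in>set (map fst ps @ [l]). length s < length (flat ps @ l)"
  using assms
proof (induction ps)
  case Nil then show ?case by simp
next
  case (Cons a ps)
  obtain b r where a: "a = (b,r)" by (cases a)
  show ?case
  proof (cases "ps = []")
    case True then show ?thesis by (auto simp: a)
  next
    case False then show ?thesis using Cons.IH by (auto simp: a)
  qed
qed

lemma choice_list: "\<forall>x\<in>set xs. \<exists>y. P x y \<Longrightarrow> \<exists>ys. length ys = length xs \<and> (\<forall>i<length xs. P (xs!i) (ys!i))"
proof (induction xs)
  case Nil then show ?case by simp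
next
  case (Cons x xs)
  then obtain ys where ys: "length ys = length xs" "\<forall>i<length xs. P (xs!i) (ys!i)" by auto
  obtain y where "P x y" using Cons.prems by auto
  then show ?case using ys by (intro exI[of _ "y#ys"]) (auto simp: nth_Cons split: nat.splits)
qed

lemma len_le_cnt: "\<forall>p\<in>set xs. 1 \<le> snd p \<Longrightarrow> length xs \<le> cnt xs"
  by (induction xs) auto

lemma mass_gsat: "is_gsat D kcs T \<Longrightarrow> mass T = cnt kcs"
  by (induction rule: is_gsat.induct) (auto simp: cnt_def)



definition Inv :: "(int \<times> nat) list \<Rightarrow> gsat \<Rightarrow> bool" where
"Inv kcs T \<longleftrightarrow> is_gsat D_salt kcs T \<and> ideal D_salt T \<and> nkeys T = length kcs
   \<and> build_memory T \<le> 2 * real (length kcs)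
   \<and> build_time T \<le> real (length kcs) * (3 + log 2 (real (length kcs)))
   \<and> build_time T \<le> 3 * real (length kcs) + Phi (cnt kcs)
   \<and> depth T \<le> Dl (cnt kcs)"

lemma sum_list_idx: "sum_list (map f xs) = (\<Sum>i<length xs. f (xs!i))"
  by (simp add: sum_list_sum_nth atLeast0LessThan)

lemma main:
  "sorted_wrt (\<lambda>a b. fst a < fst b) kcs \<Longrightarrow> \<forall>p\<in>set kcs. 1 \<le> snd p \<Longrightarrow> \<exists>T. Inv kcs T"
proof (induction "length kcs" arbitrary: kcs rule: less_induct)
  case less
  show ?case
  proof (cases "kcs = []")
    case True
    then show ?thesis
      by (intro exI[of _ Leaf]) (simp add: Inv_def Phi_def Dl_def is_gsat.leaf)
  next
    case ne: False
    define n where "n = length kcs"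
    define m where "m = cnt kcs"
    define L where "L = log 2 (real m)"
    define M where "M = real m / (L + 1)"
    have n1: "1 \<le> n" using ne unfolding n_def by (cases kcs) auto
    have nm: "n \<le> m" unfolding n_def m_def using len_le_cnt less.prems(2) .
    have m1: "1 \<le> m" using n1 nm by simp
    have L0: "0 \<le> L" unfolding L_def using m1 by simp
    have M0: "0 \<le> M" unfolding M_def using L0 by simp
    obtain ps l where D: "kcs = flat ps @ l" "ps \<noteq> []" "\<forall>b\<in>fst ` set ps. real (cnt b) \<le> M"
      "real (cnt l) \<le> M" "length ps = 1 \<or> real (length ps) * M < real (cnt kcs)"
      using decomp[OF ne M0] by blast
    define segs where "segs = map fst ps @ [l]"
    define reps where "reps = map snd ps"
    define k where "k = length ps"
    have k1: "1 \<le> k" using D(2) unfolding k_def by (cases ps) auto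
    have lsegs: "length segs = k + 1" unfolding segs_def k_def by simp
    have sorted: "sorted_wrt (\<lambda>a b. fst a < fst b) (flat ps @ l)" using less.prems(1) D(1) by simp
    note SP = seg_props[OF sorted]
    have segsM: "\<forall>s\<in>set segs. real (cnt s) \<le> M" using D(3,4) unfolding segs_def by auto
    have "\<forall>s\<in>set segs. \<exists>T. Inv s T"
    proof
      fix s assume s: "s \<in> set segs"
      have "length s < length kcs" using seg_shorter[OF D(2)] s D(1) unfolding segs_def by auto
      moreover have "sorted_wrt (\<lambda>a b. fst a < fst b) s" using SP(1) s unfolding segs_def by auto
      moreover have "\<forall>p\<in>set s. 1 \<le> snd p" using SP(1) s less.prems(2) D(1) unfolding segs_def by blast
      ultimately show "\<exists>T. Inv s T" using less.hyps by blast
    qed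
    from choice_list[OF this] obtain ts where ts: "length ts = length segs"
      "\<forall>i<length segs. Inv (segs!i) (ts!i)" by blast
    define T where "T = Node m reps ts"
    have ltk: "length ts = k + 1" using ts(1) lsegs by simp
    have Ii: "Inv (segs!i) (ts!i)" if "i < k+1" for i using ts(2) that lsegs by simp
    have segi: "segs!i \<in> set segs" if "i < k+1" for i using that lsegs by simp
    have pn: "n = k + sum_list (map length segs)" unfolding n_def D(1) part_len segs_def k_def ..
    have pm: "m = cnt reps + sum_list (map cnt segs)" unfolding m_def D(1) part_cnt segs_def reps_def ..
    have repsin: "set reps \<subseteq> set kcs" using reps_in_flat[of ps] D(1) unfolding reps_def by auto
    have kr: "k \<le> cnt reps" using len_le_cnt[of reps] repsin less.prems(2) unfolding k_def reps_def by auto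
    have kL: "real k \<le> 1 + L"
    proof (cases "k = 1")
      case True then show ?thesis using L0 by simp
    next
      case False
      then have "real k * M < real m" using D(5) unfolding k_def m_def by simp
      then have "real k * real m < real m * (L + 1)" unfolding M_def using L0 by (simp add: field_simps)
      then show ?thesis using m1 L0 by (simp add: mult.commute)
    qed
    have kint: "int k \<le> max 1 \<lceil>D_salt (real m)\<rceil>"
    proof (cases "k = 1")
      case True then show ?thesis by simp
    next
      case False
      then have "real k * M < real m" using D(5) unfolding k_def m_def by simp
      then have "real k * real m < real m * (L + 1)" unfolding M_def using L0 by (simp add: field_simps)
      then have "real k < L + 1" using m1 by (simp add: mult.commute)
      then have "real k < real_of_int \<lceil>L\<rceil> + 1" using le_of_int_ceiling[of L] by linarith
      then have "int k < \<lceil>L\<rceil> + 1" by linarith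
      then show ?thesis unfolding D_salt_def L_def by simp
    qed
    have gs: "is_gsat D_salt (segs!i) (ts!i)" if "i < k+1" for i using Ii[OF that] unfolding Inv_def by simp
    have massi: "mass (ts!i) = cnt (segs!i)" if "i < k+1" for i using mass_gsat[OF gs[OF that]] .
    have segment_eq: "segment reps j kcs = segs!j" if "j \<le> k" for j
      using segment_flat[OF sorted, of j] that unfolding reps_def segs_def k_def D(1)[symmetric] by simp
    have isg: "is_gsat D_salt kcs T" unfolding T_def
    proof (rule is_gsat.node)
      show "kcs \<noteq> []" by fact
      show "m = sum_list (map snd kcs)" unfolding m_def cnt_def ..
      show "reps \<noteq> []" using D(2) unfolding reps_def by simp
      show "int (length reps) \<le> max 1 \<lceil>D_salt (real m)\<rceil>" using kint unfolding reps_def k_def by simp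
      show "sorted_wrt (\<lambda>a b. fst a < fst b) reps" using SP(2) unfolding reps_def .
      show "set reps \<subseteq> set kcs" by fact
      show "length ts = length reps + 1" using ts(1) lsegs unfolding reps_def k_def by simp
      show "\<forall>j<length ts. is_gsat D_salt (segment reps j kcs) (ts ! j)"
        using gs segment_eq ts(1) lsegs by auto
    qed
    have idl: "ideal D_salt T" unfolding T_def
    proof (simp only: ideal.simps, intro ballI conjI)
      fix t assume "t \<in> set ts"
      then obtain i where i: "i < k+1" "t = ts!i" using ts(1) lsegs by (metis in_set_conv_nth)
      show "real (mass t) \<le> real m / (D_salt (real m) + 1)"
        using massi[OF i(1)] segsM segi[OF i(1)] i(2) unfolding M_def L_def D_salt_def by simp
      show "ideal D_salt t" using Ii[OF i(1)] i(2) unfolding Inv_def by simp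
    qed
    have nk: "nkeys T = n"
    proof -
      have "sum_list (map nkeys ts) = sum_list (map length segs)"
        unfolding sum_list_idx using Ii ts(1) lsegs unfolding Inv_def by (intro sum.cong) auto
      then show ?thesis unfolding T_def pn reps_def k_def by simp
    qed
    have sumlen: "real (sum_list (map length segs)) = (\<Sum>i<k+1. real (length (segs!i)))"
      unfolding sum_list_idx lsegs by simp
    have mem: "build_memory T \<le> 2 * real n"
    proof -
      have "sum_list (map build_memory ts) \<le> (\<Sum>i<k+1. 2 * real (length (segs!i)))"
        unfolding sum_list_idx ltk using Ii unfolding Inv_def by (intro sum_mono) auto
      then show ?thesis unfolding T_def using pn sumlen k1 reps_def k_def
        by (simp add: sum_distrib_left[symmetric])
    qed
    have logn0: "0 \<le> log 2 (real n)" using n1 by simp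
    have time1: "build_time T \<le> real n * (3 + log 2 (real n))"
    proof -
      have "sum_list (map build_time ts) \<le> (\<Sum>i<k+1. real (length (segs!i)) * (3 + log 2 (real n)))"
        unfolding sum_list_idx ltk
      proof (rule sum_mono)
        fix i assume "i \<in> {..<k+1}"
        then have i: "i < k+1" by simp
        have le: "length (segs!i) \<le> n" using pn member_le_sum_list[of "length (segs!i)" "map length segs"] segi[OF i] by auto
        have "build_time (ts!i) \<le> real (length (segs!i)) * (3 + log 2 (real (length (segs!i))))"
          using Ii[OF i] unfolding Inv_def by simp
        also have "\<dots> \<le> real (length (segs!i)) * (3 + log 2 (real n))"
        proof (cases "length (segs!i) = 0")
          case True then show ?thesis by simp
        next
          case False
          then have "log 2 (real (length (segs!i))) \<le> log 2 (real n)" using le n1 by (subst log_le_cancel_iff) auto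
          then show ?thesis by (intro mult_left_mono) auto
        qed
        finally show "build_time (ts!i) \<le> real (length (segs!i)) * (3 + log 2 (real n))" .
      qed
      also have "\<dots> = (real n - real k) * (3 + log 2 (real n))"
        using pn sumlen by (simp add: sum_distrib_right[symmetric])
      finally have S: "sum_list (map build_time ts) \<le> (real n - real k) * (3 + log 2 (real n))" .
      have "build_time T = real (1 + k) + real k * (1 + log 2 (real n)) + sum_list (map build_time ts)"
        unfolding T_def using nk[unfolded T_def] reps_def k_def by simp
      also have "\<dots> \<le> real (1 + k) + real k * (1 + log 2 (real n)) + (real n - real k) * (3 + log 2 (real n))"
        using S by simp
      also have "\<dots> \<le> real n * (3 + log 2 (real n))" using k1 by (simp add: algebra_simps)
      finally show ?thesis .
    qed
    have ms_le: "cnt (segs!i) + 1 \<le> m" if "i < k+1" for i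
      using pm kr k1 member_le_sum_list[of "cnt (segs!i)" "map cnt segs"] segi[OF that] by auto
    have time2: "build_time T \<le> 3 * real n + Phi m"
    proof -
      have "sum_list (map build_time ts) \<le> (\<Sum>i<k+1. 3 * real (length (segs!i)) + Phi (cnt (segs!i)))"
        unfolding sum_list_idx ltk using Ii unfolding Inv_def by (intro sum_mono) auto
      also have "\<dots> = 3 * (real n - real k) + sum_list (map Phi (map cnt segs))"
      proof -
        have "sum_list (map Phi (map cnt segs)) = (\<Sum>i<k+1. Phi (cnt (segs!i)))"
          unfolding sum_list_idx length_map lsegs using lsegs by (intro sum.cong) auto
        then show ?thesis using pn sumlen by (simp add: sum.distrib sum_distrib_left[symmetric])
      qed
      finally have S: "sum_list (map build_time ts) \<le> 3 * (real n - real k) + sum_list (map Phi (map cnt segs))" .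
      have pot: "phi m + sum_list (map Phi (map cnt segs)) \<le> Phi m"
      proof (rule pot_step[OF m1])
        show "\<forall>x\<in>set (map cnt segs). real x \<le> real m / (log 2 (real m) + 1)"
          using segsM unfolding M_def L_def by auto
        show "sum_list (map cnt segs) + 1 \<le> m" using pm kr k1 by simp
      qed
      have kln: "real k * log 2 (real n) \<le> phi m"
      proof -
        have "log 2 (real n) \<le> L" unfolding L_def using nm n1 by simp
        then have "real k * log 2 (real n) \<le> (1 + L) * L" using kL logn0 by (intro mult_mono) auto
        then show ?thesis unfolding phi_def L_def .
      qed
      have "build_time T = real (1 + k) + real k * (1 + log 2 (real n)) + sum_list (map build_time ts)"
        unfolding T_def using nk[unfolded T_def] reps_def k_def by simp
      also have "\<dots> \<le> 3 * real n + Phi m" using S pot kln k1 by (simp add: algebra_simps)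
      finally show ?thesis .
    qed
    have dep: "depth T \<le> Dl m"
    proof -
      have "Max (set (0 # map depth ts)) \<le> N (floor_log m)"
      proof (subst Max_le_iff, simp, simp, intro ballI)
        fix x assume "x \<in> set (0 # map depth ts)"
        then consider "x = 0" | i where "i < k+1" "x = depth (ts!i)" using ts(1) lsegs
          by (auto simp: in_set_conv_nth)
        then show "x \<le> N (floor_log m)"
        proof cases
          case 1 then show ?thesis by simp
        next
          case (2 i)
          have "x \<le> Dl (cnt (segs!i))" using Ii[OF 2(1)] 2(2) unfolding Inv_def by simp
          also have "\<dots> \<le> N (floor_log m)"
          proof (cases "cnt (segs!i) = 0")
            case True then show ?thesis by (simp add: Dl_def)
          next
            case False
            have "Dl (cnt (segs!i)) + 1 \<le> Dl m"
              using depth_step[of "cnt (segs!i)" m] False ms_le[OF 2(1)] segsM segi[OF 2(1)]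
              unfolding M_def L_def by simp
            then show ?thesis using m1 by (simp add: Dl_def)
          qed
          finally show ?thesis .
        qed
      qed
      then show ?thesis unfolding T_def using m1 by (simp add: Dl_def)
    qed
    show ?thesis
      using isg idl nk mem time1 time2 dep unfolding Inv_def n_def m_def by blast
  qed
qed


theorem theorem10:
  shows "\<exists>C > 0. \<forall>kcs :: (int \<times> nat) list.
           sorted_wrt (\<lambda>a b. fst a < fst b) kcs \<longrightarrow>
           (\<forall>p \<in> set kcs. 1 \<le> snd p) \<longrightarrow>
           (let n = length kcs; m = sum_list (map snd kcs) in
            \<exists>T. is_salt kcs T \<and> ideal_salt T
              \<and> (2 \<le> n \<longrightarrow> build_time T \<le> C * min (real n * log 2 (real n)) (real m))
              \<and> build_memory T \<le> C * real n
              \<and> (4 \<le> m \<longrightarrow> real (depth T) \<le> C * log 2 (real m) / log 2 (log 2 (real m))))"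
proof (intro exI[of _ "1003::real"] conjI allI impI)
  fix kcs :: "(int \<times> nat) list"
  assume s: "sorted_wrt (\<lambda>a b. fst a < fst b) kcs" and c: "\<forall>p \<in> set kcs. 1 \<le> snd p"
  obtain T where I: "Inv kcs T" using main[OF s c] by blast
  define n where "n = length kcs"
  define m where "m = sum_list (map snd kcs)"
  have cm: "cnt kcs = m" unfolding m_def cnt_def ..
  have nm: "n \<le> m" using len_le_cnt[OF c] cm unfolding n_def by simp
  have t1: "build_time T \<le> 1003 * min (real n * log 2 (real n)) (real m)" if n2: "2 \<le> n"
  proof -
    have l1: "1 \<le> log 2 (real n)" using n2 by simp
    have "build_time T \<le> real n * (3 + log 2 (real n))" using I unfolding Inv_def n_def by simp
    also have "\<dots> \<le> real n * (1003 * log 2 (real n))" using l1 by (intro mult_left_mono) auto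
    finally have a: "build_time T \<le> 1003 * (real n * log 2 (real n))" by simp
    have "build_time T \<le> 3 * real n + Phi m" using I cm unfolding Inv_def n_def by simp
    also have "\<dots> \<le> 1003 * real m"
    proof -
      have "real n \<le> real m" using nm by simp
      then show ?thesis using real_sqrt_ge_zero[of "real m"] unfolding Phi_def by linarith
    qed
    finally show ?thesis using a by (simp add: min_def)
  qed
  have mem: "build_memory T \<le> 1003 * real n" using I unfolding Inv_def n_def by simp
  have dep: "real (depth T) \<le> 1003 * log 2 (real m) / log 2 (log 2 (real m))" if m4: "4 \<le> m"
  proof -
    have "real (depth T) \<le> real (Dl m)" using I cm unfolding Inv_def by simp
    also have "\<dots> \<le> 40 * log 2 (real m) / log 2 (log 2 (real m))" by (rule Dl_bound[OF m4])
    also have "\<dots> \<le> 1003 * log 2 (real m) / log 2 (log 2 (real m))"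
    proof -
      have "2 \<le> log 2 (real m)"
      proof -
        have "log 2 (2^2) \<le> log 2 (real m)" using m4 by (subst log_le_cancel_iff) auto
        moreover have "log 2 ((2::real)^2) = 2" using log_pow_cancel[of "2::real" 2] by simp
        ultimately show ?thesis by simp
      qed
      then have "0 \<le> log 2 (real m) / log 2 (log 2 (real m))" by simp
      then show ?thesis by (simp add: mult_right_mono)
    qed
    finally show ?thesis .
  qed
  have g: "is_salt kcs T" "ideal_salt T" using I unfolding Inv_def is_salt_def ideal_salt_def by auto
  show "let n = length kcs; m = sum_list (map snd kcs) in
            \<exists>T. is_salt kcs T \<and> ideal_salt T
              \<and> (2 \<le> n \<longrightarrow> build_time T \<le> 1003 * min (real n * log 2 (real n)) (real m))
              \<and> build_memory T \<le> 1003 * real n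
              \<and> (4 \<le> m \<longrightarrow> real (depth T) \<le> 1003 * log 2 (real m) / log 2 (log 2 (real m)))"
    unfolding Let_def n_def[symmetric] m_def[symmetric] using g t1 mem dep by blast
qed simp


end
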